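(* Let $d\ge 1$ and let $G$ be a twin-free graph with $n$ vertices whose VC-dimension is at most $d$. Then every identifying code $C$ of $G$ satisfies $|C|\ge (n-1)^{1/d}$.
   Context: For $v\in V(G)$, $N[v]$ is the closed neighbourhood of $v$. An identifying code of $G$ is a set $C\subseteq V(G)$ such that $N[v]\cap C\neq\emptyset$ for all $v$ and $N[u]\cap C\neq N[v]\cap C$ for all distinct $u,v$. $G$ is twin-free if no two distinct vertices have the same closed neighbourhood. A set $X\subseteq V(G)$ is shattered if for every $S\subseteq X$ there is a vertex $v$ with $N[v]\cap X=S$; the VC-dimension of $G$ is the largest size of a shattered set. *)

theory Defs
  imports Complex_Main
begin

definition simple_graph :: "'a set \<Rightarrow> ('a \<Rightarrow> 'a \<Rightarrow> bool) \<Rightarrow> bool" where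
  "simple_graph V E \<longleftrightarrow> finite V \<and> (\<forall>u v. E u v \<longrightarrow> u \<in> V \<and> v \<in> V)
     \<and> (\<forall>u v. E u v \<longrightarrow> E v u) \<and> (\<forall>v. \<not> E v v)"

definition closed_nbhd :: "'a set \<Rightarrow> ('a \<Rightarrow> 'a \<Rightarrow> bool) \<Rightarrow> 'a \<Rightarrow> 'a set" where
  "closed_nbhd V E v = insert v {u \<in> V. E v u}"

definition identifying_code :: "'a set \<Rightarrow> ('a \<Rightarrow> 'a \<Rightarrow> bool) \<Rightarrow> 'a set \<Rightarrow> bool" where
  "identifying_code V E C \<longleftrightarrow> C \<subseteq> V
     \<and> (\<forall>v\<in>V. closed_nbhd V E v \<inter> C \<noteq> {})
     \<and> (\<forall>u\<in>V. \<forall>v\<in>V. u \<noteq> v \<longrightarrow> closed_nbhd V E u \<inter> C \<noteq> closed_nbhd V E v \<inter> C)"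

definition twin_free :: "'a set \<Rightarrow> ('a \<Rightarrow> 'a \<Rightarrow> bool) \<Rightarrow> bool" where
  "twin_free V E \<longleftrightarrow> (\<forall>u\<in>V. \<forall>v\<in>V. u \<noteq> v \<longrightarrow> closed_nbhd V E u \<noteq> closed_nbhd V E v)"

definition shattered :: "'a set \<Rightarrow> ('a \<Rightarrow> 'a \<Rightarrow> bool) \<Rightarrow> 'a set \<Rightarrow> bool" where
  "shattered V E X \<longleftrightarrow> X \<subseteq> V \<and> (\<forall>S\<subseteq>X. \<exists>v\<in>V. closed_nbhd V E v \<inter> X = S)"

definition vc_dim_le :: "'a set \<Rightarrow> ('a \<Rightarrow> 'a \<Rightarrow> bool) \<Rightarrow> nat \<Rightarrow> bool" where
  "vc_dim_le V E d \<longleftrightarrow> (\<forall>X. shattered V E X \<longrightarrow> card X \<le> d)"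

end

theory Submission
  imports Defs
begin

definition shf :: "'a set set \<Rightarrow> 'a set \<Rightarrow> bool" where
  "shf F X \<longleftrightarrow> (\<forall>S\<subseteq>X. \<exists>A\<in>F. A \<inter> X = S)"

lemma pajor:
  assumes "finite U"
  shows "\<forall>A\<in>F. A \<subseteq> U \<Longrightarrow> card F \<le> card {X. X \<subseteq> U \<and> shf F X}"
  using assms
proof (induction U arbitrary: F rule: finite_induct)
  case empty
  then have "F \<subseteq> {{}}" by auto
  then have "F = {} \<or> F = {{}}" by auto
  then show ?case
  proof
    assume "F = {}" then show ?thesis by simp
  next
    assume F: "F = {{}}"
    have "shf F {}" unfolding shf_def F by auto
    then have "{X. X \<subseteq> {} \<and> shf F X} = {{}}" by auto
    then show ?thesis using F by simp
  qed
next
  case (insert x U)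
  define F0 where "F0 = {A\<in>F. x \<notin> A}"
  define G where "G = {A\<in>F. x \<in> A}"
  define F1 where "F1 = (\<lambda>A. A - {x}) ` G"
  have finF: "finite F"
    by (rule finite_subset[of F "Pow (insert x U)"]) (use insert in auto)
  have FG: "F = F0 \<union> G" "F0 \<inter> G = {}" unfolding F0_def G_def by auto
  have cF: "card F = card F0 + card G"
    using FG finF by (metis card_Un_disjoint finite_Un)
  have inj: "inj_on (\<lambda>A. A - {x}) G"
    unfolding G_def inj_on_def by (metis (no_types, lifting) insert_Diff mem_Collect_eq)
  have cG: "card G = card F1" unfolding F1_def using inj by (simp add: card_image)
  have finF0: "finite F0" and finF1: "finite F1"
    using finF FG unfolding F1_def by (auto intro: finite_subset)
  have sub0: "\<forall>A\<in>F0. A \<subseteq> U" using insert.prems unfolding F0_def by auto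
  have sub1: "\<forall>A\<in>F1. A \<subseteq> U" using insert.prems unfolding F1_def G_def by auto
  have IH1: "card (F0 \<union> F1) \<le> card {X. X \<subseteq> U \<and> shf (F0 \<union> F1) X}"
    by (rule insert.IH) (use sub0 sub1 in auto)
  have IH2: "card (F0 \<inter> F1) \<le> card {X. X \<subseteq> U \<and> shf (F0 \<inter> F1) X}"
    by (rule insert.IH) (use sub0 in auto)
  define S1 where "S1 = {X. X \<subseteq> U \<and> shf (F0 \<union> F1) X}"
  define S2 where "S2 = {X. X \<subseteq> U \<and> shf (F0 \<inter> F1) X}"
  define T where "T = {X. X \<subseteq> insert x U \<and> shf F X}"
  have S1T: "S1 \<subseteq> T"
  proof
    fix X assume "X \<in> S1"
    then have XU: "X \<subseteq> U" and sh: "shf (F0 \<union> F1) X" unfolding S1_def by auto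
    have xX: "x \<notin> X" using XU insert.hyps by auto
    have "shf F X" unfolding shf_def
    proof (intro allI impI)
      fix S assume "S \<subseteq> X"
      then obtain B where B: "B \<in> F0 \<union> F1" "B \<inter> X = S" using sh unfolding shf_def by blast
      show "\<exists>A\<in>F. A \<inter> X = S"
      proof (cases "B \<in> F0")
        case True then show ?thesis using B unfolding F0_def by auto
      next
        case False
        then obtain A where "A \<in> G" "B = A - {x}" using B unfolding F1_def by auto
        then show ?thesis using B xX unfolding G_def by auto
      qed
    qed
    then show "X \<in> T" using XU unfolding T_def by auto
  qed
  have S2T: "insert x ` S2 \<subseteq> T"
  proof
    fix Y assume "Y \<in> insert x ` S2"
    then obtain X where XS: "X \<in> S2" "Y = insert x X" by auto
    then have XU: "X \<subseteq> U" and sh: "shf (F0 \<inter> F1) X" unfolding S2_def by auto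
    have xX: "x \<notin> X" using XU insert.hyps by auto
    have "shf F (insert x X)" unfolding shf_def
    proof (intro allI impI)
      fix S assume S: "S \<subseteq> insert x X"
      then have "S - {x} \<subseteq> X" by auto
      then obtain B where B: "B \<in> F0" "B \<in> F1" "B \<inter> X = S - {x}" using sh unfolding shf_def by blast
      show "\<exists>A\<in>F. A \<inter> insert x X = S"
      proof (cases "x \<in> S")
        case True
        obtain A where A: "A \<in> G" "B = A - {x}" using B unfolding F1_def by auto
        then have "A = insert x B" unfolding G_def by auto
        then have "A \<inter> insert x X = S" using B True by auto
        then show ?thesis using A unfolding G_def by auto
      next
        case False
        then show ?thesis using B S unfolding F0_def by (intro bexI[of _ B]) auto
      qed
    qed
    then show "Y \<in> T" using XS XU unfolding T_def by auto
  qed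
  have disj: "S1 \<inter> insert x ` S2 = {}" using insert.hyps unfolding S1_def S2_def by auto
  have injx: "inj_on (insert x) S2"
  proof (rule inj_onI)
    fix X Y assume "X \<in> S2" "Y \<in> S2" "insert x X = insert x Y"
    then show "X = Y" using insert.hyps unfolding S2_def by (metis insert_ident mem_Collect_eq subsetD)
  qed
  have finT: "finite T" unfolding T_def using insert.hyps by auto
  have "card F = card F0 + card F1" using cF cG by simp
  also have "\<dots> = card (F0 \<union> F1) + card (F0 \<inter> F1)"
    using card_Un_Int[OF finF0 finF1] .
  also have "\<dots> \<le> card S1 + card S2" using IH1 IH2 unfolding S1_def S2_def by simp
  also have "\<dots> = card S1 + card (insert x ` S2)" using injx by (simp add: card_image)
  also have "\<dots> = card (S1 \<union> insert x ` S2)"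
    using disj S1T S2T finT by (metis card_Un_disjoint finite_subset)
  also have "\<dots> \<le> card T" using S1T S2T finT by (intro card_mono) auto
  finally show ?case unfolding T_def .
qed

lemma small_subsets:
  assumes "finite C" "C \<noteq> {}"
  shows "card {X. X \<subseteq> C \<and> card X \<le> d} \<le> card C ^ d + 1"
proof -
  have "{X. X \<subseteq> C \<and> card X \<le> d} \<subseteq> insert {} (set ` {xs. set xs \<subseteq> C \<and> length xs = d})"
  proof
    fix X assume "X \<in> {X. X \<subseteq> C \<and> card X \<le> d}"
    then have X: "X \<subseteq> C" "card X \<le> d" by auto
    show "X \<in> insert {} (set ` {xs. set xs \<subseteq> C \<and> length xs = d})"
    proof (cases "X = {}")
      case False
      have fX: "finite X" using X assms finite_subset by blast
      obtain ys where ys: "set ys = X" "distinct ys" using finite_distinct_list[OF fX] by metis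
      then have ly: "length ys = card X" by (metis distinct_card)
      have "ys \<noteq> []" using ys False by auto
      then have "hd ys \<in> X" using ys by auto
      define xs where "xs = ys @ replicate (d - card X) (hd ys)"
      have "set xs = X" unfolding xs_def using ys \<open>hd ys \<in> X\<close> by (auto simp: set_replicate_conv_if)
      moreover have "length xs = d" unfolding xs_def using ly X by simp
      ultimately have "xs \<in> {xs. set xs \<subseteq> C \<and> length xs = d}" using X by simp
      then show ?thesis using \<open>set xs = X\<close> by blast
    qed auto
  qed
  then have "card {X. X \<subseteq> C \<and> card X \<le> d} \<le> card (insert {} (set ` {xs. set xs \<subseteq> C \<and> length xs = d}))"
    using assms by (intro card_mono) (auto simp: finite_lists_length_eq)
  also have "\<dots> \<le> card (set ` {xs. set xs \<subseteq> C \<and> length xs = d}) + 1"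
    by (cases "finite (set ` {xs. set xs \<subseteq> C \<and> length xs = d})") (auto simp: card_insert_if)
  also have "\<dots> \<le> card {xs. set xs \<subseteq> C \<and> length xs = d} + 1"
    using assms by (simp add: card_image_le finite_lists_length_eq)
  also have "\<dots> = card C ^ d + 1" using assms by (simp add: card_lists_length_eq)
  finally show ?thesis .
qed

theorem mainTheorem2:
  fixes V :: "'a set" and E :: "'a \<Rightarrow> 'a \<Rightarrow> bool" and C :: "'a set" and d n :: nat
  assumes "d \<ge> 1"
    and "simple_graph V E"
    and "V \<noteq> {}"
    and "card V = n"
    and "twin_free V E"
    and "vc_dim_le V E d"
    and "identifying_code V E C"
  shows "real (card C) \<ge> (real n - 1) powr (1 / real d)"
proof -
  have finV: "finite V" using assms(2) unfolding simple_graph_def by auto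
  have CV: "C \<subseteq> V" using assms(7) unfolding identifying_code_def by auto
  have finC: "finite C" using finV CV finite_subset by blast
  obtain v where "v \<in> V" using assms(3) by auto
  then have "C \<noteq> {}" using assms(7) unfolding identifying_code_def by auto
  define F where "F = (\<lambda>v. closed_nbhd V E v \<inter> C) ` V"
  have injF: "inj_on (\<lambda>v. closed_nbhd V E v \<inter> C) V"
    using assms(7) unfolding identifying_code_def inj_on_def by blast
  have cF: "card F = n" unfolding F_def using injF assms(4) by (simp add: card_image)
  have "card F \<le> card {X. X \<subseteq> C \<and> shf F X}"
    by (rule pajor[OF finC]) (auto simp: F_def)
  also have "\<dots> \<le> card {X. X \<subseteq> C \<and> card X \<le> d}"
  proof (rule card_mono)
    show "finite {X. X \<subseteq> C \<and> card X \<le> d}" using finC by auto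
    show "{X. X \<subseteq> C \<and> shf F X} \<subseteq> {X. X \<subseteq> C \<and> card X \<le> d}"
    proof clarify
      fix X assume XC: "X \<subseteq> C" and sh: "shf F X"
      have "shattered V E X" unfolding shattered_def
      proof (intro conjI allI impI)
        show "X \<subseteq> V" using XC CV by auto
        fix S assume "S \<subseteq> X"
        then obtain A where "A \<in> F" "A \<inter> X = S" using sh unfolding shf_def by blast
        then obtain w where "w \<in> V" "closed_nbhd V E w \<inter> C \<inter> X = S" unfolding F_def by auto
        then show "\<exists>v\<in>V. closed_nbhd V E v \<inter> X = S" using XC by (intro bexI[of _ w]) auto
      qed
      then show "card X \<le> d" using assms(6) unfolding vc_dim_le_def by auto
    qed
  qed
  also have "\<dots> \<le> card C ^ d + 1" using small_subsets[OF finC \<open>C \<noteq> {}\<close>] .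
  finally have nle: "n \<le> card C ^ d + 1" using cF by simp
  have "n \<noteq> 0" using assms(3,4) finV card_0_eq by blast
  then have n1: "n \<ge> 1" by simp
  have kpos: "real (card C) > 0" using finC \<open>C \<noteq> {}\<close> by (simp add: card_gt_0_iff)
  have "real n \<le> real (card C ^ d + 1)" using nle by (simp only: of_nat_le_iff)
  then have le: "real n - 1 \<le> real (card C) ^ d" by simp
  have "(real n - 1) powr (1 / real d) \<le> (real (card C) ^ d) powr (1 / real d)"
    using le n1 by (intro powr_mono2) auto
  also have "\<dots> = real (card C)"
    using kpos assms(1) by (simp add: powr_realpow[symmetric] powr_powr)
  finally show ?thesis .
qed

end
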